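(* Let $Y\in\{0,1\}$, $T$, $H$ be random variables on a common probability space. For a random variable (or tuple) $X$, let $R^*(X):=\inf_g \Pr(g(X)\neq Y)$, the infimum over measurable $g$ with values in $\{0,1\}$. Then $$0\le R^*(T)-R^*(T,H)\le\sqrt{\tfrac12\,I(Y;H\mid T)},$$ where $I(Y;H\mid T)$ is the conditional mutual information between $Y$ and $H$ given $T$, measured in nats.
   Context: $R^*(T)$ and $R^*(T,H)$ are the Bayes-optimal 0–1 risks using the trace alone and the trace together with the history. *)

theory Defs
  imports "HOL-Probability.Probability"
begin

definition bayes_risk :: "'a measure \<Rightarrow> 'b measure \<Rightarrow> ('a \<Rightarrow> 'b) \<Rightarrow> ('a \<Rightarrow> bool) \<Rightarrow> real" where
  "bayes_risk M MX X Y =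
     (INF g \<in> MX \<rightarrow>\<^sub>M (count_space UNIV :: bool measure).
        measure M {\<omega> \<in> space M. g (X \<omega>) \<noteq> Y \<omega>})"

end

theory Submission
  imports Defs
begin


lemma enn_aux1: "(r::ennreal) \<le> 1 \<Longrightarrow> r = ennreal (min 1 (enn2real r))"
  by (smt (verit, best) dual_order.strict_trans2 enn2real_1 enn2real_mono
    ennreal_enn2real ennreal_one_less_top)

lemma enn_aux2: "(r::ennreal) + s = 1 \<Longrightarrow> s = ennreal (1 - min 1 (enn2real r))"
  by (metis add_diff_eq_iff_ennreal enn2real_1 enn2real_mono enn2real_nonneg
    ennreal_add_diff_cancel_left ennreal_add_eq_top ennreal_add_less_top
    ennreal_enn2real ennreal_minus ennreal_one_less_top ennreal_top_neq_one
    min.absorb2)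

lemma xlnx_bound: fixes x K :: real assumes "0 \<le> x" "x \<le> K" shows "\<bar>x * ln x\<bar> \<le> K*K + 1"
proof (cases "x \<le> 1")
  case True
  show ?thesis
  proof (cases "x = 0")
    case False
    then have "x > 0" using assms by simp
    have "ln x \<ge> 1 - 1/x"
      by (smt (verit) divide_le_0_1_iff ln_divide_pos ln_le_minus_one ln_one \<open>x>0\<close>)
    then have h1: "x * ln x \<ge> x * (1 - 1/x)" using \<open>x>0\<close> by (intro mult_left_mono) auto
    have h2: "x * (1 - 1/x) = x - 1" using \<open>x>0\<close> by (simp add: right_diff_distrib)
    have h3: "x * ln x \<le> 0" using \<open>x>0\<close> True by (simp add: mult_nonneg_nonpos)
    have h4: "0 \<le> K * K" by simp
    show ?thesis using h1 h2 h3 h4 \<open>x>0\<close> by linarith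
  qed simp
next
  case False
  then have "0 \<le> ln x" "ln x \<le> x" using ln_le_minus_one[of x] by auto
  then have "x * ln x \<le> x * x" "0 \<le> x * ln x" using False by (auto intro: mult_left_mono)
  moreover have "x * x \<le> K * K" using assms by (intro mult_mono) auto
  ultimately show ?thesis by simp
qed
lemma plog: fixes a p :: real shows "0 \<le> a \<Longrightarrow> 0 \<le> p \<Longrightarrow> (p = 0 \<longrightarrow> a = 0) \<Longrightarrow> p * (a/p * ln (a/p)) = a * ln a - a * ln p"
  by (cases "a = 0") (auto simp: ln_div algebra_simps)
lemma xlnx_01: fixes x :: real shows "0 \<le> x \<Longrightarrow> x \<le> 1 \<Longrightarrow> \<bar>x * ln x\<bar> \<le> 2"
  using xlnx_bound[of x 1] by simp

definition phi :: "real \<Rightarrow> real" where "phi x = x * ln x + (1 - x) * ln (1 - x)"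

lemma pinsker_deriv:
  fixes a x :: real
  assumes "0 < x" "x < 1"
  shows "((\<lambda>x. phi a - a * ln x - (1 - a) * ln (1 - x) - 2 * (a - x)^2) has_real_derivative
           (x - a) * (1 - 4 * x * (1 - x)) / (x * (1 - x))) (at x)"
  using assms
  apply (auto intro!: derivative_eq_intros)
  apply (subgoal_tac "x \<noteq> 0 \<and> 1 - x \<noteq> 0")
   apply (simp add: divide_simps)
   apply (simp add: algebra_simps power2_eq_square)
  apply simp
  done

lemma four_le: fixes x :: real shows "0 \<le> 1 - 4 * x * (1 - x)"
proof -
  have "1 - 4 * x * (1 - x) = (2 * x - 1)^2" by (simp add: power2_eq_square algebra_simps)
  then show ?thesis by simp
qed

lemma pinsker_bin:
  fixes a b :: real
  assumes a0: "0 \<le> a" and a1: "a \<le> 1" and b0: "0 < b" and b1: "b < 1"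
  shows "2 * (a - b)^2 \<le> phi a - (a * ln b + (1 - a) * ln (1 - b))"
proof -
  define G where "G x = phi a - a * ln x - (1 - a) * ln (1 - x) - 2 * (a - x)^2" for x
  have Ga: "G a = 0" unfolding G_def phi_def by simp
  have cont: "continuous_on {l..u} G" if "0 \<le> l" "u \<le> 1" "a = 0 \<or> 0 < l" "a = 1 \<or> u < 1" for l u
  proof -
    have c1: "continuous_on {l..u} (\<lambda>x. a * ln x)"
    proof (cases "a = 0")
      case False
      then have "0 < l" using that by auto
      then show ?thesis by (intro continuous_intros) auto
    qed simp
    have c2: "continuous_on {l..u} (\<lambda>x. (1 - a) * ln (1 - x))"
    proof (cases "a = 1")
      case False
      then have "u < 1" using that by auto
      then show ?thesis by (intro continuous_intros) auto
    qed simp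
    show ?thesis unfolding G_def by (intro continuous_intros c1 c2)
  qed
  show ?thesis
  proof (cases "a \<le> b")
    case True
    have "G a \<le> G b"
    proof (rule DERIV_nonneg_imp_increasing_open[OF True])
      fix x assume x: "a < x" "x < b"
      then have x01: "0 < x" "x < 1" using a0 b1 by auto
      have nn: "0 \<le> (x - a) * (1 - 4 * x * (1 - x)) / (x * (1 - x))"
        using x x01 four_le[of x] by (intro divide_nonneg_pos mult_nonneg_nonneg) auto
      have D: "(G has_real_derivative ((x - a) * (1 - 4 * x * (1 - x)) / (x * (1 - x)))) (at x)"
        unfolding G_def by (rule pinsker_deriv[OF x01])
      show "\<exists>y. (G has_real_derivative y) (at x) \<and> 0 \<le> y"
        using D nn by blast
    next
      show "continuous_on {a..b} G" using a0 b0 b1 by (intro cont) auto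
    qed
    then show ?thesis using Ga unfolding G_def by simp
  next
    case False
    have "(\<lambda>x. - G x) b \<le> (\<lambda>x. - G x) a"
    proof (rule DERIV_nonneg_imp_increasing_open[of b a "\<lambda>x. - G x"])
      show "b \<le> a" using False by simp
      fix x assume x: "b < x" "x < a"
      then have x01: "0 < x" "x < 1" using a1 b0 by auto
      have nn: "0 \<le> (a - x) * (1 - 4 * x * (1 - x)) / (x * (1 - x))"
        using x x01 four_le[of x] by (intro divide_nonneg_pos mult_nonneg_nonneg) auto
      have eq: "- ((x - a) * (1 - 4 * x * (1 - x)) / (x * (1 - x))) = (a - x) * (1 - 4 * x * (1 - x)) / (x * (1 - x))"
        by (subst minus_divide_left) (simp add: algebra_simps)
      have D: "((\<lambda>x. - G x) has_real_derivative - ((x - a) * (1 - 4 * x * (1 - x)) / (x * (1 - x)))) (at x)"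
        unfolding G_def by (rule DERIV_minus[OF pinsker_deriv[OF x01]])
      show "\<exists>y. ((\<lambda>x. - G x) has_real_derivative y) (at x) \<and> 0 \<le> y"
        using D nn unfolding eq by blast
    next
      show "continuous_on {b..a} (\<lambda>x. - G x)" using a1 b0 False by (intro continuous_intros cont) auto
    qed
    then show ?thesis using Ga unfolding G_def by simp
  qed
qed

lemma (in prob_space) abs_int_le_sqrt:
  fixes d :: "'a \<Rightarrow> real"
  assumes [measurable]: "d \<in> borel_measurable M" and bd: "\<And>x. x \<in> space M \<Longrightarrow> \<bar>d x\<bar> \<le> B"
  shows "(\<integral>x. \<bar>d x\<bar> \<partial>M) \<le> sqrt (\<integral>x. (d x)^2 \<partial>M)"
proof -
  define c where "c = (\<integral>x. \<bar>d x\<bar> \<partial>M)"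
  have i1: "integrable M (\<lambda>x. \<bar>d x\<bar>)"
    by (rule integrable_const_bound[where B=B]) (auto intro!: AE_I2 bd)
  have i2: "integrable M (\<lambda>x. (d x)^2)"
  proof (rule integrable_const_bound[where B="B*B"])
    show "AE x in M. norm ((d x)^2) \<le> B * B"
    proof (intro AE_I2)
      fix x assume "x \<in> space M"
      then have "\<bar>d x\<bar> * \<bar>d x\<bar> \<le> B * B" using bd by (intro mult_mono) (auto intro: order_trans[OF abs_ge_zero])
      then show "norm ((d x)^2) \<le> B * B" by (simp add: power2_eq_square abs_mult)
    qed
  qed simp
  have "0 \<le> (\<integral>x. (\<bar>d x\<bar> - c)^2 \<partial>M)" by simp
  also have "(\<integral>x. (\<bar>d x\<bar> - c)^2 \<partial>M) = (\<integral>x. (d x)^2 - 2 * c * \<bar>d x\<bar> + c^2 \<partial>M)"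
    by (intro Bochner_Integration.integral_cong) (auto simp: power2_eq_square algebra_simps)
  also have "\<dots> = (\<integral>x. (d x)^2 \<partial>M) - 2 * c * c + c^2"
    using i1 i2 by (simp add: c_def prob_space)
  finally have "c^2 \<le> (\<integral>x. (d x)^2 \<partial>M)" by (simp add: power2_eq_square)
  then show ?thesis unfolding c_def[symmetric] by (rule real_le_rsqrt)
qed

locale bsetup = prob_space M for M :: "'a measure" +
  fixes Y :: "'a \<Rightarrow> bool"
  assumes Ym[measurable]: "Y \<in> M \<rightarrow>\<^sub>M (count_space UNIV :: bool measure)"
begin

definition cp :: "'z measure \<Rightarrow> ('a \<Rightarrow> 'z) \<Rightarrow> ('z \<Rightarrow> real) \<Rightarrow> bool" where
 "cp MZ Z a \<longleftrightarrow> Z \<in> M \<rightarrow>\<^sub>M MZ \<and> a \<in> borel_measurable MZ \<and> (\<forall>z\<in>space MZ. 0 \<le> a z \<and> a z \<le> 1) \<and>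
   distr (density M (\<lambda>\<omega>. indicator {\<omega>. Y \<omega>} \<omega>)) MZ Z = density (distr M MZ Z) (\<lambda>z. ennreal (a z)) \<and>
   distr (density M (\<lambda>\<omega>. indicator {\<omega>. \<not> Y \<omega>} \<omega>)) MZ Z = density (distr M MZ Z) (\<lambda>z. ennreal (1 - a z))"

lemma cp_nn1:
  assumes "cp MZ Z a" and g[measurable]: "g \<in> borel_measurable MZ"
  shows "(\<integral>\<^sup>+\<omega>. indicator {\<omega>. Y \<omega>} \<omega> * g (Z \<omega>) \<partial>M) = (\<integral>\<^sup>+z. ennreal (a z) * g z \<partial>distr M MZ Z)"
proof -
  have Z[measurable]: "Z \<in> M \<rightarrow>\<^sub>M MZ" and a[measurable]: "a \<in> borel_measurable MZ"
   and e: "distr (density M (\<lambda>\<omega>. indicator {\<omega>. Y \<omega>} \<omega>)) MZ Z = density (distr M MZ Z) (\<lambda>z. ennreal (a z))"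
    using assms(1) unfolding cp_def by auto
  have "(\<integral>\<^sup>+z. ennreal (a z) * g z \<partial>distr M MZ Z) = (\<integral>\<^sup>+z. g z \<partial>density (distr M MZ Z) (\<lambda>z. ennreal (a z)))"
    by (simp add: nn_integral_density)
  also have "\<dots> = (\<integral>\<^sup>+z. g z \<partial>distr (density M (\<lambda>\<omega>. indicator {\<omega>. Y \<omega>} \<omega>)) MZ Z)"
    using e by simp
  also have "\<dots> = (\<integral>\<^sup>+\<omega>. g (Z \<omega>) \<partial>density M (\<lambda>\<omega>. indicator {\<omega>. Y \<omega>} \<omega>))"
    by (subst nn_integral_distr) auto
  also have "\<dots> = (\<integral>\<^sup>+\<omega>. indicator {\<omega>. Y \<omega>} \<omega> * g (Z \<omega>) \<partial>M)"
    by (subst nn_integral_density) auto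
  finally show ?thesis by simp
qed

lemma cp_nn0:
  assumes "cp MZ Z a" and g[measurable]: "g \<in> borel_measurable MZ"
  shows "(\<integral>\<^sup>+\<omega>. indicator {\<omega>. \<not> Y \<omega>} \<omega> * g (Z \<omega>) \<partial>M) = (\<integral>\<^sup>+z. ennreal (1 - a z) * g z \<partial>distr M MZ Z)"
proof -
  have Z[measurable]: "Z \<in> M \<rightarrow>\<^sub>M MZ" and a[measurable]: "a \<in> borel_measurable MZ"
   and e: "distr (density M (\<lambda>\<omega>. indicator {\<omega>. \<not> Y \<omega>} \<omega>)) MZ Z = density (distr M MZ Z) (\<lambda>z. ennreal (1 - a z))"
    using assms(1) unfolding cp_def by auto
  have "(\<integral>\<^sup>+z. ennreal (1 - a z) * g z \<partial>distr M MZ Z) = (\<integral>\<^sup>+z. g z \<partial>density (distr M MZ Z) (\<lambda>z. ennreal (1 - a z)))"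
    by (simp add: nn_integral_density)
  also have "\<dots> = (\<integral>\<^sup>+z. g z \<partial>distr (density M (\<lambda>\<omega>. indicator {\<omega>. \<not> Y \<omega>} \<omega>)) MZ Z)"
    using e by simp
  also have "\<dots> = (\<integral>\<^sup>+\<omega>. g (Z \<omega>) \<partial>density M (\<lambda>\<omega>. indicator {\<omega>. \<not> Y \<omega>} \<omega>))"
    by (subst nn_integral_distr) auto
  also have "\<dots> = (\<integral>\<^sup>+\<omega>. indicator {\<omega>. \<not> Y \<omega>} \<omega> * g (Z \<omega>) \<partial>M)"
    by (subst nn_integral_density) auto
  finally show ?thesis by simp
qed

lemma ac_distr_ind:
  assumes Z[measurable]: "Z \<in> M \<rightarrow>\<^sub>M MZ" and P[measurable]: "Measurable.pred M P"
  shows "absolutely_continuous (distr M MZ Z) (distr (density M (\<lambda>\<omega>. indicator {\<omega>. P \<omega>} \<omega>)) MZ Z)"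
  unfolding absolutely_continuous_def
proof
  fix A assume "A \<in> null_sets (distr M MZ Z)"
  then have A[measurable]: "A \<in> sets MZ" and "emeasure (distr M MZ Z) A = 0"
    by (auto simp: null_sets_def)
  then have A0: "emeasure M (Z -` A \<inter> space M) = 0"
    by (simp add: emeasure_distr)
  have "emeasure (distr (density M (\<lambda>\<omega>. indicator {\<omega>. P \<omega>} \<omega>)) MZ Z) A
      = emeasure (density M (\<lambda>\<omega>. indicator {\<omega>. P \<omega>} \<omega>)) (Z -` A \<inter> space M)"
    by (subst emeasure_distr) auto
  also have "\<dots> = (\<integral>\<^sup>+\<omega>. indicator {\<omega>. P \<omega>} \<omega> * indicator (Z -` A \<inter> space M) \<omega> \<partial>M)"
    by (subst emeasure_density) auto
  also have "\<dots> \<le> (\<integral>\<^sup>+\<omega>. indicator (Z -` A \<inter> space M) \<omega> \<partial>M)"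
    by (intro nn_integral_mono) (auto simp: indicator_def)
  also have "\<dots> = 0" using A0 by simp
  finally show "A \<in> null_sets (distr (density M (\<lambda>\<omega>. indicator {\<omega>. P \<omega>} \<omega>)) MZ Z)"
    by (auto simp: null_sets_def)
qed

lemma cp_exists:
  assumes Z[measurable]: "Z \<in> M \<rightarrow>\<^sub>M MZ"
  shows "\<exists>a. cp MZ Z a"
proof -
  define PZ where "PZ = distr M MZ Z"
  interpret PZ: prob_space PZ unfolding PZ_def by (rule prob_space_distr) simp
  define \<nu>1 where "\<nu>1 = distr (density M (\<lambda>\<omega>. indicator {\<omega>. Y \<omega>} \<omega>)) MZ Z"
  define \<nu>0 where "\<nu>0 = distr (density M (\<lambda>\<omega>. indicator {\<omega>. \<not> Y \<omega>} \<omega>)) MZ Z"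
  have sPZ[simp, measurable_cong]: "sets PZ = sets MZ" and [simp]: "space PZ = space MZ" unfolding PZ_def by auto
  have ac1: "absolutely_continuous PZ \<nu>1" unfolding PZ_def \<nu>1_def by (rule ac_distr_ind) auto
  have ac0: "absolutely_continuous PZ \<nu>0" unfolding PZ_def \<nu>0_def by (rule ac_distr_ind) auto
  define r1 where "r1 = RN_deriv PZ \<nu>1"
  define r0 where "r0 = RN_deriv PZ \<nu>0"
  have r1m[measurable]: "r1 \<in> borel_measurable MZ" unfolding r1_def
    using borel_measurable_RN_deriv[of PZ \<nu>1] by (simp add: measurable_def)
  have r0m[measurable]: "r0 \<in> borel_measurable MZ" unfolding r0_def
    using borel_measurable_RN_deriv[of PZ \<nu>0] by (simp add: measurable_def)
  have d1: "density PZ r1 = \<nu>1" unfolding r1_def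
    by (rule PZ.density_RN_deriv[OF ac1]) (simp add: \<nu>1_def)
  have d0: "density PZ r0 = \<nu>0" unfolding r0_def
    by (rule PZ.density_RN_deriv[OF ac0]) (simp add: \<nu>0_def)
  have dsum: "density PZ (\<lambda>z. r1 z + r0 z) = density PZ (\<lambda>_. 1)"
  proof (rule measure_eqI)
    fix A assume "A \<in> sets (density PZ (\<lambda>z. r1 z + r0 z))"
    then have A[measurable]: "A \<in> sets MZ" by simp
    have "emeasure (density PZ (\<lambda>z. r1 z + r0 z)) A = (\<integral>\<^sup>+z. (r1 z + r0 z) * indicator A z \<partial>PZ)"
      by (subst emeasure_density) auto
    also have "\<dots> = (\<integral>\<^sup>+z. r1 z * indicator A z \<partial>PZ) + (\<integral>\<^sup>+z. r0 z * indicator A z \<partial>PZ)"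
      by (subst nn_integral_add[symmetric]) (auto simp: distrib_right)
    also have "\<dots> = emeasure \<nu>1 A + emeasure \<nu>0 A"
      by (simp add: d1[symmetric] d0[symmetric] emeasure_density)
    also have "\<dots> = (\<integral>\<^sup>+\<omega>. indicator {\<omega>. Y \<omega>} \<omega> * indicator (Z -` A \<inter> space M) \<omega> \<partial>M)
       + (\<integral>\<^sup>+\<omega>. indicator {\<omega>. \<not> Y \<omega>} \<omega> * indicator (Z -` A \<inter> space M) \<omega> \<partial>M)"
      unfolding \<nu>1_def \<nu>0_def by (simp add: emeasure_distr emeasure_density)
    also have "\<dots> = (\<integral>\<^sup>+\<omega>. indicator (Z -` A \<inter> space M) \<omega> \<partial>M)"
      by (subst nn_integral_add[symmetric]) (auto intro!: nn_integral_cong simp del: nn_integral_indicator simp: indicator_def)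
    also have "\<dots> = emeasure PZ A" unfolding PZ_def by (simp add: emeasure_distr)
    also have "\<dots> = emeasure (density PZ (\<lambda>_. 1)) A" by (simp add: density_1)
    finally show "emeasure (density PZ (\<lambda>z. r1 z + r0 z)) A = emeasure (density PZ (\<lambda>_. 1)) A" .
  qed simp
  have AEs: "AE z in PZ. r1 z + r0 z = 1"
    using PZ.density_unique_iff[THEN iffD1, OF _ _ dsum] by simp
  define a where "a z = min 1 (enn2real (r1 z))" for z
  have am[measurable]: "a \<in> borel_measurable MZ" unfolding a_def by measurable
  have AE1: "AE z in PZ. r1 z = ennreal (a z)"
    using AEs
  proof eventually_elim
    case (elim z)
    then have "r1 z \<le> 1" by (metis le_iff_add)
    then show ?case unfolding a_def by (rule enn_aux1)
  qed
  have AE0: "AE z in PZ. r0 z = ennreal (1 - a z)"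
    using AEs AE1
  proof eventually_elim
    case (elim z)
    then show ?case unfolding a_def by (intro enn_aux2) simp
  qed
  have "cp MZ Z a"
    unfolding cp_def
  proof (intro conjI ballI)
    show "distr (density M (\<lambda>\<omega>. indicator {\<omega>. Y \<omega>} \<omega>)) MZ Z = density (distr M MZ Z) (\<lambda>z. ennreal (a z))"
    proof -
      have "AE z in PZ. ennreal (a z) = r1 z" using AE1 by (auto elim: AE_mp)
      then have "density PZ (\<lambda>z. ennreal (a z)) = density PZ r1" by (intro density_cong) auto
      then show ?thesis by (simp add: PZ_def[symmetric] d1 \<nu>1_def)
    qed
    show "distr (density M (\<lambda>\<omega>. indicator {\<omega>. \<not> Y \<omega>} \<omega>)) MZ Z = density (distr M MZ Z) (\<lambda>z. ennreal (1 - a z))"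
    proof -
      have "AE z in PZ. ennreal (1 - a z) = r0 z" using AE0 by (auto elim: AE_mp)
      then have "density PZ (\<lambda>z. ennreal (1 - a z)) = density PZ r0" by (intro density_cong) auto
      then show ?thesis by (simp add: PZ_def[symmetric] d0 \<nu>0_def)
    qed
  qed (auto simp: a_def)
  then show ?thesis by blast
qed

definition "pY = prob {\<omega>\<in>space M. Y \<omega>}"

lemma cp_basic:
  assumes "cp MZ Z a"
  shows "Z \<in> M \<rightarrow>\<^sub>M MZ" "a \<in> borel_measurable MZ" "\<And>z. z \<in> space MZ \<Longrightarrow> 0 \<le> a z" "\<And>z. z \<in> space MZ \<Longrightarrow> a z \<le> 1"
  using assms unfolding cp_def by auto

lemma cp_mass1:
  assumes "cp MZ Z a"
  shows "(\<integral>\<^sup>+z. ennreal (a z) \<partial>distr M MZ Z) = ennreal pY"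
proof -
  note [measurable] = cp_basic(1,2)[OF assms]
  have "(\<integral>\<^sup>+z. ennreal (a z) \<partial>distr M MZ Z) = (\<integral>\<^sup>+z. ennreal (a z) * 1 \<partial>distr M MZ Z)" by simp
  also have "\<dots> = (\<integral>\<^sup>+\<omega>. indicator {\<omega>. Y \<omega>} \<omega> * 1 \<partial>M)"
    by (rule cp_nn1[OF assms, symmetric]) simp
  also have "\<dots> = (\<integral>\<^sup>+\<omega>. indicator {\<omega>\<in>space M. Y \<omega>} \<omega> \<partial>M)"
    by (intro nn_integral_cong) (auto simp: indicator_def)
  also have "\<dots> = emeasure M {\<omega>\<in>space M. Y \<omega>}"
    by (rule nn_integral_indicator) simp
  finally show ?thesis by (simp add: pY_def emeasure_eq_measure)
qed

lemma cp_mass0: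
  assumes "cp MZ Z a"
  shows "(\<integral>\<^sup>+z. ennreal (1 - a z) \<partial>distr M MZ Z) = ennreal (1 - pY)"
proof -
  note [measurable] = cp_basic(1,2)[OF assms]
  have "(\<integral>\<^sup>+z. ennreal (1 - a z) \<partial>distr M MZ Z) = (\<integral>\<^sup>+z. ennreal (1 - a z) * 1 \<partial>distr M MZ Z)" by simp
  also have "\<dots> = (\<integral>\<^sup>+\<omega>. indicator {\<omega>. \<not> Y \<omega>} \<omega> * 1 \<partial>M)"
    by (rule cp_nn0[OF assms, symmetric]) simp
  also have "\<dots> = (\<integral>\<^sup>+\<omega>. indicator {\<omega>\<in>space M. \<not> Y \<omega>} \<omega> \<partial>M)"
    by (intro nn_integral_cong) (auto simp: indicator_def)
  also have "\<dots> = emeasure M {\<omega>\<in>space M. \<not> Y \<omega>}"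
    by (rule nn_integral_indicator) simp
  also have "\<dots> = ennreal (1 - pY)"
    unfolding pY_def by (subst prob_compl[symmetric]) (auto simp: emeasure_eq_measure intro!: arg_cong[where f="measure M"])
  finally show ?thesis .
qed

lemma cp_err:
  assumes "cp MZ Z a" and g[measurable]: "g \<in> MZ \<rightarrow>\<^sub>M (count_space UNIV :: bool measure)"
  shows "measure M {\<omega> \<in> space M. g (Z \<omega>) \<noteq> Y \<omega>} = (\<integral>z. (if g z then 1 - a z else a z) \<partial>distr M MZ Z)"
proof -
  note [measurable] = cp_basic(1,2)[OF assms(1)]
  have "emeasure M {\<omega> \<in> space M. g (Z \<omega>) \<noteq> Y \<omega>} = (\<integral>\<^sup>+\<omega>. indicator {\<omega> \<in> space M. g (Z \<omega>) \<noteq> Y \<omega>} \<omega> \<partial>M)"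
    by simp
  also have "\<dots> = (\<integral>\<^sup>+\<omega>. indicator {\<omega>. Y \<omega>} \<omega> * indicator {z. \<not> g z} (Z \<omega>) + indicator {\<omega>. \<not> Y \<omega>} \<omega> * indicator {z. g z} (Z \<omega>) \<partial>M)"
    by (intro nn_integral_cong) (auto simp: indicator_def)
  also have "\<dots> = (\<integral>\<^sup>+\<omega>. indicator {\<omega>. Y \<omega>} \<omega> * indicator {z. \<not> g z} (Z \<omega>) \<partial>M) + (\<integral>\<^sup>+\<omega>. indicator {\<omega>. \<not> Y \<omega>} \<omega> * indicator {z. g z} (Z \<omega>) \<partial>M)"
    by (rule nn_integral_add) auto
  also have "\<dots> = (\<integral>\<^sup>+z. ennreal (a z) * indicator {z. \<not> g z} z \<partial>distr M MZ Z) + (\<integral>\<^sup>+z. ennreal (1 - a z) * indicator {z. g z} z \<partial>distr M MZ Z)"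
    by (subst cp_nn1[OF assms(1)], simp, subst cp_nn0[OF assms(1)], simp_all)
  also have "\<dots> = (\<integral>\<^sup>+z. ennreal (a z) * indicator {z. \<not> g z} z + ennreal (1 - a z) * indicator {z. g z} z \<partial>distr M MZ Z)"
    by (rule nn_integral_add[symmetric]) auto
  also have "\<dots> = (\<integral>\<^sup>+z. ennreal (if g z then 1 - a z else a z) \<partial>distr M MZ Z)"
    by (intro nn_integral_cong) (auto simp: indicator_def)
  finally have e: "emeasure M {\<omega> \<in> space M. g (Z \<omega>) \<noteq> Y \<omega>} = (\<integral>\<^sup>+z. ennreal (if g z then 1 - a z else a z) \<partial>distr M MZ Z)" .
  have "(\<integral>z. (if g z then 1 - a z else a z) \<partial>distr M MZ Z) = enn2real (\<integral>\<^sup>+z. ennreal (if g z then 1 - a z else a z) \<partial>distr M MZ Z)"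
    by (rule integral_eq_nn_integral) (auto simp: cp_basic[OF assms(1)])
  then show ?thesis using e by (simp add: measure_def)
qed

lemma cp_AE1:
  assumes "cp MZ Z a"
  shows "AE z in distr M MZ Z. pY = 0 \<longrightarrow> a z = 0"
proof (cases "pY = 0")
  case True
  note [measurable] = cp_basic(1,2)[OF assms]
  have "(\<integral>\<^sup>+z. ennreal (a z) \<partial>distr M MZ Z) = 0" using cp_mass1[OF assms] True by simp
  then have "AE z in distr M MZ Z. ennreal (a z) = 0"
    by (subst (asm) nn_integral_0_iff_AE) auto
  then show ?thesis using AE_space
    by eventually_elim (use cp_basic[OF assms] in \<open>force simp: ennreal_eq_0_iff\<close>)
qed simp

lemma cp_AE0:
  assumes "cp MZ Z a"
  shows "AE z in distr M MZ Z. 1 - pY = 0 \<longrightarrow> 1 - a z = 0"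
proof (cases "1 - pY = 0")
  case True
  note [measurable] = cp_basic(1,2)[OF assms]
  have "(\<integral>\<^sup>+z. ennreal (1 - a z) \<partial>distr M MZ Z) = 0" using cp_mass0[OF assms] True by simp
  then have "AE z in distr M MZ Z. ennreal (1 - a z) = 0"
    by (subst (asm) nn_integral_0_iff_AE) auto
  then show ?thesis using AE_space
    by eventually_elim (use cp_basic[OF assms] in \<open>force simp: ennreal_eq_0_iff\<close>)
qed simp

definition "fd a x = (if fst x then a (snd x) / pY else (1 - a (snd x)) / (1 - pY))"

lemma pY_bounds: "0 \<le> pY" "pY \<le> 1" unfolding pY_def by auto

lemma cp_joint:
  assumes cp: "cp MZ Z a"
  shows "distr M (count_space UNIV \<Otimes>\<^sub>M MZ) (\<lambda>\<omega>. (Y \<omega>, Z \<omega>))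
       = density (distr M (count_space UNIV) Y \<Otimes>\<^sub>M distr M MZ Z) (\<lambda>x. ennreal (fd a x))"
proof -
  note [measurable] = cp_basic(1,2)[OF assms]
  define PY where "PY = distr M (count_space UNIV) Y"
  define PZ where "PZ = distr M MZ Z"
  interpret PY: prob_space PY unfolding PY_def by (rule prob_space_distr) simp
  interpret PZ: prob_space PZ unfolding PZ_def by (rule prob_space_distr) simp
  interpret PYZ: pair_prob_space PY PZ by unfold_locales
  have sPZ[simp, measurable_cong]: "sets PZ = sets MZ" and [simp]: "space PZ = space MZ" unfolding PZ_def by auto
  have sPY[simp, measurable_cong]: "sets PY = sets (count_space UNIV)" and [simp]: "space PY = UNIV" unfolding PY_def by auto
  have fdm[measurable]: "fd a \<in> borel_measurable (count_space UNIV \<Otimes>\<^sub>M MZ)"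
    unfolding fd_def by measurable
  have AE1: "AE z in PZ. pY * (a z / pY) = a z" using cp_AE1[OF cp] unfolding PZ_def[symmetric]
    by eventually_elim auto
  have AE0: "AE z in PZ. (1 - pY) * ((1 - a z) / (1 - pY)) = 1 - a z" using cp_AE0[OF cp] unfolding PZ_def[symmetric]
    by eventually_elim auto
  show ?thesis
    unfolding PY_def[symmetric] PZ_def[symmetric]
  proof (rule measure_eqI)
    show "sets (distr M (count_space UNIV \<Otimes>\<^sub>M MZ) (\<lambda>\<omega>. (Y \<omega>, Z \<omega>))) = sets (density (PY \<Otimes>\<^sub>M PZ) (\<lambda>x. ennreal (fd a x)))"
      by (simp add: sets_pair_measure_cong[OF sPY sPZ])
    fix C assume "C \<in> sets (distr M (count_space UNIV \<Otimes>\<^sub>M MZ) (\<lambda>\<omega>. (Y \<omega>, Z \<omega>)))"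
    then have C[measurable]: "C \<in> sets (count_space UNIV \<Otimes>\<^sub>M MZ)" by simp
    have "emeasure (distr M (count_space UNIV \<Otimes>\<^sub>M MZ) (\<lambda>\<omega>. (Y \<omega>, Z \<omega>))) C
        = emeasure M ((\<lambda>\<omega>. (Y \<omega>, Z \<omega>)) -` C \<inter> space M)"
      by (rule emeasure_distr) auto
    also have "\<dots> = (\<integral>\<^sup>+\<omega>. indicator ((\<lambda>\<omega>. (Y \<omega>, Z \<omega>)) -` C \<inter> space M) \<omega> \<partial>M)"
      by (rule nn_integral_indicator[symmetric]) measurable
    also have "\<dots> = (\<integral>\<^sup>+\<omega>. indicator {\<omega>. Y \<omega>} \<omega> * indicator C (True, Z \<omega>) + indicator {\<omega>. \<not> Y \<omega>} \<omega> * indicator C (False, Z \<omega>) \<partial>M)"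
      by (intro nn_integral_cong) (auto simp: indicator_def)
    also have "\<dots> = (\<integral>\<^sup>+\<omega>. indicator {\<omega>. Y \<omega>} \<omega> * indicator C (True, Z \<omega>) \<partial>M) + (\<integral>\<^sup>+\<omega>. indicator {\<omega>. \<not> Y \<omega>} \<omega> * indicator C (False, Z \<omega>) \<partial>M)"
      by (rule nn_integral_add) auto
    also have "\<dots> = (\<integral>\<^sup>+z. ennreal (a z) * indicator C (True, z) \<partial>PZ) + (\<integral>\<^sup>+z. ennreal (1 - a z) * indicator C (False, z) \<partial>PZ)"
      unfolding PZ_def by (subst cp_nn1[OF cp], simp, subst cp_nn0[OF cp], simp_all)
    finally have L: "emeasure (distr M (count_space UNIV \<Otimes>\<^sub>M MZ) (\<lambda>\<omega>. (Y \<omega>, Z \<omega>))) C = \<dots>" .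
    define K where "K y = (\<integral>\<^sup>+z. ennreal (fd a (y, z)) * indicator C (y, z) \<partial>PZ)" for y
    have "emeasure (density (PY \<Otimes>\<^sub>M PZ) (\<lambda>x. ennreal (fd a x))) C = (\<integral>\<^sup>+x. ennreal (fd a x) * indicator C x \<partial>(PY \<Otimes>\<^sub>M PZ))"
      by (rule emeasure_density) auto
    also have "\<dots> = (\<integral>\<^sup>+y. K y \<partial>PY)"
      unfolding K_def by (rule PZ.nn_integral_fst[symmetric]) simp
    also have "\<dots> = (\<integral>\<^sup>+\<omega>. K (Y \<omega>) \<partial>M)"
      unfolding PY_def by (rule nn_integral_distr) auto
    also have "\<dots> = (\<integral>\<^sup>+\<omega>. indicator {\<omega>\<in>space M. Y \<omega>} \<omega> * K True + indicator {\<omega>\<in>space M. \<not> Y \<omega>} \<omega> * K False \<partial>M)"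
      by (intro nn_integral_cong) (auto simp: indicator_def)
    also have "\<dots> = emeasure M {\<omega>\<in>space M. Y \<omega>} * K True + emeasure M {\<omega>\<in>space M. \<not> Y \<omega>} * K False"
      by (subst nn_integral_add) (auto simp: nn_integral_multc)
    also have "emeasure M {\<omega>\<in>space M. Y \<omega>} = ennreal pY"
      unfolding pY_def by (simp add: emeasure_eq_measure)
    also have "emeasure M {\<omega>\<in>space M. \<not> Y \<omega>} = ennreal (1 - pY)"
      unfolding pY_def by (subst prob_compl[symmetric]) (auto simp: emeasure_eq_measure intro!: arg_cong[where f="measure M"])
    also have "ennreal pY * K True = (\<integral>\<^sup>+z. ennreal (a z) * indicator C (True, z) \<partial>PZ)"
    proof -
      have "ennreal pY * K True = (\<integral>\<^sup>+z. ennreal pY * (ennreal (a z / pY) * indicator C (True, z)) \<partial>PZ)"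
        unfolding K_def fd_def by (subst nn_integral_cmult) auto
      also have "\<dots> = (\<integral>\<^sup>+z. ennreal (a z) * indicator C (True, z) \<partial>PZ)"
        using AE1
      proof (intro nn_integral_cong_AE, eventually_elim)
        case (elim z)
        then show ?case
          using pY_bounds by (simp add: ennreal_mult'[symmetric] mult.assoc[symmetric])
      qed
      finally show ?thesis .
    qed
    also have "ennreal (1 - pY) * K False = (\<integral>\<^sup>+z. ennreal (1 - a z) * indicator C (False, z) \<partial>PZ)"
    proof -
      have "ennreal (1 - pY) * K False = (\<integral>\<^sup>+z. ennreal (1 - pY) * (ennreal ((1 - a z) / (1 - pY)) * indicator C (False, z)) \<partial>PZ)"
        unfolding K_def fd_def by (subst nn_integral_cmult) auto
      also have "\<dots> = (\<integral>\<^sup>+z. ennreal (1 - a z) * indicator C (False, z) \<partial>PZ)"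
        using AE0
      proof (intro nn_integral_cong_AE, eventually_elim)
        case (elim z)
        then show ?case
          using pY_bounds by (simp add: ennreal_mult'[symmetric] mult.assoc[symmetric])
      qed
      finally show ?thesis .
    qed
    finally show "emeasure (distr M (count_space UNIV \<Otimes>\<^sub>M MZ) (\<lambda>\<omega>. (Y \<omega>, Z \<omega>))) C = emeasure (density (PY \<Otimes>\<^sub>M PZ) (\<lambda>x. ennreal (fd a x))) C"
      using L by simp
  qed
qed

lemma cp_int_a:
  assumes "cp MZ Z a"
  shows "(\<integral>z. a z \<partial>distr M MZ Z) = pY" "(\<integral>z. 1 - a z \<partial>distr M MZ Z) = 1 - pY"
proof -
  note [measurable] = cp_basic(1,2)[OF assms]
  show "(\<integral>z. a z \<partial>distr M MZ Z) = pY"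
    using cp_mass1[OF assms] pY_bounds
    by (subst integral_eq_nn_integral) (auto simp: cp_basic[OF assms])
  show "(\<integral>z. 1 - a z \<partial>distr M MZ Z) = 1 - pY"
    using cp_mass0[OF assms] pY_bounds
    by (subst integral_eq_nn_integral) (auto simp: cp_basic[OF assms])
qed

lemma cp_MI:
  assumes cp: "cp MZ Z a"
  shows "mutual_information (exp 1) (count_space UNIV) MZ Y Z = (\<integral>z. phi (a z) \<partial>distr M MZ Z) - phi pY"
proof -
  note [measurable] = cp_basic(1,2)[OF assms]
  define PY where "PY = distr M (count_space UNIV) Y"
  define PZ where "PZ = distr M MZ Z"
  interpret PY: prob_space PY unfolding PY_def by (rule prob_space_distr) simp
  interpret PZ: prob_space PZ unfolding PZ_def by (rule prob_space_distr) simp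
  interpret PYZ: pair_prob_space PY PZ by unfold_locales
  have sPZ[simp, measurable_cong]: "sets PZ = sets MZ" and [simp]: "space PZ = space MZ" unfolding PZ_def by auto
  have sPY[simp, measurable_cong]: "sets PY = sets (count_space UNIV)" and [simp]: "space PY = UNIV" unfolding PY_def by auto
  have fdm[measurable]: "fd a \<in> borel_measurable (count_space UNIV \<Otimes>\<^sub>M MZ)"
    unfolding fd_def by measurable
  have fdm'[measurable]: "fd a \<in> borel_measurable (PY \<Otimes>\<^sub>M PZ)"
    using fdm by (simp add: measurable_def sets_pair_measure_cong[OF sPY sPZ] space_pair_measure)
  define h where "h x = fd a x * ln (fd a x)" for x
  have hm[measurable]: "h \<in> borel_measurable (PY \<Otimes>\<^sub>M PZ)" unfolding h_def by measurable
  have fd_nn: "0 \<le> fd a x" if "snd x \<in> space MZ" for x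
    using that pY_bounds cp_basic[OF cp] unfolding fd_def by auto
  define K where "K = 1 / pY + 1 / (1 - pY)"
  have fd_le: "fd a x \<le> K" if "snd x \<in> space MZ" for x
  proof -
    have h1: "a (snd x) / pY \<le> 1 / pY" and h2: "(1 - a (snd x)) / (1 - pY) \<le> 1 / (1 - pY)"
      using that pY_bounds cp_basic[OF cp] by (auto intro!: divide_right_mono)
    have h3: "0 \<le> 1 / pY" and h4: "0 \<le> 1 / (1 - pY)" using pY_bounds by auto
    show ?thesis unfolding fd_def K_def
      by (cases "fst x") (simp_all only: if_True if_False, (use h1 h2 h3 h4 in linarith)+)
  qed
  have hint: "integrable (PY \<Otimes>\<^sub>M PZ) h"
  proof (rule PYZ.P.integrable_const_bound[where B="K*K+1"])
    show "AE x in PY \<Otimes>\<^sub>M PZ. norm (h x) \<le> K * K + 1"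
      by (intro AE_I2) (auto simp: h_def space_pair_measure intro!: xlnx_bound fd_nn fd_le)
  qed simp
  have "mutual_information (exp 1) (count_space UNIV) MZ Y Z
      = KL_divergence (exp 1) (PY \<Otimes>\<^sub>M PZ) (density (PY \<Otimes>\<^sub>M PZ) (\<lambda>x. ennreal (fd a x)))"
    unfolding mutual_information_def cp_joint[OF cp] PY_def PZ_def ..
  also have "\<dots> = (\<integral>x. fd a x * log (exp 1) (fd a x) \<partial>(PY \<Otimes>\<^sub>M PZ))"
    by (rule PYZ.P.KL_density) (auto intro!: AE_I2 fd_nn simp: space_pair_measure)
  also have "\<dots> = (\<integral>x. h x \<partial>(PY \<Otimes>\<^sub>M PZ))"
    unfolding h_def log_def by simp
  also have "\<dots> = (\<integral>y. (\<integral>z. h (y, z) \<partial>PZ) \<partial>PY)"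
    by (rule PYZ.integral_fst'[OF hint, symmetric])
  also have "\<dots> = (\<integral>\<omega>. (\<integral>z. h (Y \<omega>, z) \<partial>PZ) \<partial>M)"
    unfolding PY_def by (rule integral_distr) auto
  also have "\<dots> = (\<integral>\<omega>. indicator {\<omega>\<in>space M. Y \<omega>} \<omega> * (\<integral>z. h (True, z) \<partial>PZ)
        + indicator {\<omega>\<in>space M. \<not> Y \<omega>} \<omega> * (\<integral>z. h (False, z) \<partial>PZ) \<partial>M)"
    by (intro Bochner_Integration.integral_cong) (auto simp: indicator_def)
  also have "\<dots> = pY * (\<integral>z. h (True, z) \<partial>PZ) + (1 - pY) * (\<integral>z. h (False, z) \<partial>PZ)"
  proof -
    have "measure M {\<omega>\<in>space M. \<not> Y \<omega>} = 1 - pY"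
      unfolding pY_def by (subst prob_compl[symmetric]) (auto intro!: arg_cong[where f="measure M"])
    then show ?thesis
    proof -
      have i1: "integrable M (indicat_real {\<omega>\<in>space M. Y \<omega>})"
        by (rule integrable_real_indicator) (auto simp: emeasure_eq_measure)
      have i0: "integrable M (indicat_real {\<omega>\<in>space M. \<not> Y \<omega>})"
        by (rule integrable_real_indicator) (auto simp: emeasure_eq_measure)
      show ?thesis using i1 i0 \<open>measure M {\<omega>\<in>space M. \<not> Y \<omega>} = 1 - pY\<close>
        by (subst Bochner_Integration.integral_add) (auto simp: pY_def)
    qed
  qed
  also have "pY * (\<integral>z. h (True, z) \<partial>PZ) = (\<integral>z. a z * ln (a z) \<partial>PZ) - pY * ln pY"
  proof -
    have "pY * (\<integral>z. h (True, z) \<partial>PZ) = (\<integral>z. pY * h (True, z) \<partial>PZ)" by simp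
    also have "\<dots> = (\<integral>z. a z * ln (a z) - a z * ln pY \<partial>PZ)"
      using cp_AE1[OF cp] AE_space[of PZ] unfolding PZ_def[symmetric]
    proof (intro integral_cong_AE, simp, simp, eventually_elim)
      case (elim z)
      show ?case unfolding h_def fd_def
        using elim plog[of "a z" pY] pY_bounds cp_basic(3)[OF cp, of z] by auto
    qed
    also have "\<dots> = (\<integral>z. a z * ln (a z) \<partial>PZ) - (\<integral>z. a z \<partial>PZ) * ln pY"
    proof (subst Bochner_Integration.integral_diff)
      show "integrable PZ (\<lambda>z. a z * ln (a z))"
        by (rule PZ.integrable_const_bound[where B=2])
          (auto intro!: AE_I2 xlnx_01 simp: cp_basic[OF cp])
      show "integrable PZ (\<lambda>z. a z * ln pY)"
        by (rule PZ.integrable_const_bound[where B="\<bar>ln pY\<bar>"])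
          (auto intro!: AE_I2 simp: cp_basic[OF cp] abs_mult mult_left_le_one_le)
    qed simp
    also have "(\<integral>z. a z \<partial>PZ) = pY" unfolding PZ_def by (rule cp_int_a[OF cp])
    finally show ?thesis by simp
  qed
  also have "(1 - pY) * (\<integral>z. h (False, z) \<partial>PZ) = (\<integral>z. (1 - a z) * ln (1 - a z) \<partial>PZ) - (1 - pY) * ln (1 - pY)"
  proof -
    have "(1 - pY) * (\<integral>z. h (False, z) \<partial>PZ) = (\<integral>z. (1 - pY) * h (False, z) \<partial>PZ)" by simp
    also have "\<dots> = (\<integral>z. (1 - a z) * ln (1 - a z) - (1 - a z) * ln (1 - pY) \<partial>PZ)"
      using cp_AE0[OF cp] AE_space[of PZ] unfolding PZ_def[symmetric]
    proof (intro integral_cong_AE, simp, simp, eventually_elim)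
      case (elim z)
      show ?case unfolding h_def fd_def
        using elim plog[of "1 - a z" "1 - pY"] pY_bounds cp_basic(4)[OF cp, of z] by auto
    qed
    also have "\<dots> = (\<integral>z. (1 - a z) * ln (1 - a z) \<partial>PZ) - (\<integral>z. 1 - a z \<partial>PZ) * ln (1 - pY)"
    proof (subst Bochner_Integration.integral_diff)
      show "integrable PZ (\<lambda>z. (1 - a z) * ln (1 - a z))"
        by (rule PZ.integrable_const_bound[where B=2])
          (auto intro!: AE_I2 xlnx_01 simp: cp_basic[OF cp])
      show "integrable PZ (\<lambda>z. (1 - a z) * ln (1 - pY))"
        by (rule PZ.integrable_const_bound[where B="\<bar>ln (1 - pY)\<bar>"])
          (auto intro!: AE_I2 simp: cp_basic[OF cp] abs_mult mult_left_le_one_le)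
    qed simp
    also have "(\<integral>z. 1 - a z \<partial>PZ) = 1 - pY" unfolding PZ_def by (rule cp_int_a[OF cp])
    finally show ?thesis by simp
  qed
  also have "(\<integral>z. a z * ln (a z) \<partial>PZ) - pY * ln pY + ((\<integral>z. (1 - a z) * ln (1 - a z) \<partial>PZ) - (1 - pY) * ln (1 - pY))
      = (\<integral>z. phi (a z) \<partial>PZ) - phi pY"
  proof -
    have "(\<integral>z. phi (a z) \<partial>PZ) = (\<integral>z. a z * ln (a z) \<partial>PZ) + (\<integral>z. (1 - a z) * ln (1 - a z) \<partial>PZ)"
      unfolding phi_def
    proof (rule Bochner_Integration.integral_add)
      show "integrable PZ (\<lambda>z. a z * ln (a z))"
        by (rule PZ.integrable_const_bound[where B=2])
          (auto intro!: AE_I2 xlnx_01 simp: cp_basic[OF cp])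
      show "integrable PZ (\<lambda>z. (1 - a z) * ln (1 - a z))"
        by (rule PZ.integrable_const_bound[where B=2])
          (auto intro!: AE_I2 xlnx_01 simp: cp_basic[OF cp])
    qed
    then show ?thesis unfolding phi_def by simp
  qed
  finally show ?thesis unfolding PZ_def .
qed

lemma cp_tower1:
  assumes cpZ: "cp MZ Z a" and cpT: "cp MT T b" and pi[measurable]: "\<pi> \<in> MZ \<rightarrow>\<^sub>M MT"
    and piZ: "\<And>\<omega>. \<omega> \<in> space M \<Longrightarrow> \<pi> (Z \<omega>) = T \<omega>" and g[measurable]: "g \<in> borel_measurable MT"
  shows "(\<integral>\<^sup>+z. ennreal (a z) * g (\<pi> z) \<partial>distr M MZ Z) = (\<integral>\<^sup>+t. ennreal (b t) * g t \<partial>distr M MT T)"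
proof -
  note [measurable] = cp_basic(1,2)[OF cpZ] cp_basic(1,2)[OF cpT]
  have "(\<integral>\<^sup>+z. ennreal (a z) * g (\<pi> z) \<partial>distr M MZ Z) = (\<integral>\<^sup>+\<omega>. indicator {\<omega>. Y \<omega>} \<omega> * g (\<pi> (Z \<omega>)) \<partial>M)"
    by (rule cp_nn1[OF cpZ, of "\<lambda>z. g (\<pi> z)", symmetric]) simp
  also have "\<dots> = (\<integral>\<^sup>+\<omega>. indicator {\<omega>. Y \<omega>} \<omega> * g (T \<omega>) \<partial>M)"
    by (intro nn_integral_cong) (simp add: piZ)
  also have "\<dots> = (\<integral>\<^sup>+t. ennreal (b t) * g t \<partial>distr M MT T)"
    by (rule cp_nn1[OF cpT]) simp
  finally show ?thesis .
qed

lemma cp_tower0: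
  assumes cpZ: "cp MZ Z a" and cpT: "cp MT T b" and pi[measurable]: "\<pi> \<in> MZ \<rightarrow>\<^sub>M MT"
    and piZ: "\<And>\<omega>. \<omega> \<in> space M \<Longrightarrow> \<pi> (Z \<omega>) = T \<omega>" and g[measurable]: "g \<in> borel_measurable MT"
  shows "(\<integral>\<^sup>+z. ennreal (1 - a z) * g (\<pi> z) \<partial>distr M MZ Z) = (\<integral>\<^sup>+t. ennreal (1 - b t) * g t \<partial>distr M MT T)"
proof -
  note [measurable] = cp_basic(1,2)[OF cpZ] cp_basic(1,2)[OF cpT]
  have "(\<integral>\<^sup>+z. ennreal (1 - a z) * g (\<pi> z) \<partial>distr M MZ Z) = (\<integral>\<^sup>+\<omega>. indicator {\<omega>. \<not> Y \<omega>} \<omega> * g (\<pi> (Z \<omega>)) \<partial>M)"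
    by (rule cp_nn0[OF cpZ, of "\<lambda>z. g (\<pi> z)", symmetric]) simp
  also have "\<dots> = (\<integral>\<^sup>+\<omega>. indicator {\<omega>. \<not> Y \<omega>} \<omega> * g (T \<omega>) \<partial>M)"
    by (intro nn_integral_cong) (simp add: piZ)
  also have "\<dots> = (\<integral>\<^sup>+t. ennreal (1 - b t) * g t \<partial>distr M MT T)"
    by (rule cp_nn0[OF cpT]) simp
  finally show ?thesis .
qed

lemma distr_pi:
  assumes Z[measurable]: "Z \<in> M \<rightarrow>\<^sub>M MZ" and pi[measurable]: "\<pi> \<in> MZ \<rightarrow>\<^sub>M MT"
    and piZ: "\<And>\<omega>. \<omega> \<in> space M \<Longrightarrow> \<pi> (Z \<omega>) = T \<omega>"
  shows "distr M MT T = distr (distr M MZ Z) MT \<pi>"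
proof -
  have "distr (distr M MZ Z) MT \<pi> = distr M MT (\<pi> \<circ> Z)" by (rule distr_distr) auto
  also have "\<dots> = distr M MT T" by (intro distr_cong) (auto simp: piZ)
  finally show ?thesis by simp
qed

lemma ln_nonpos01: "0 \<le> (x::real) \<Longrightarrow> x \<le> 1 \<Longrightarrow> ln x \<le> 0"
  by (cases "x = 0") auto

lemma neg_ln_nn: "0 \<le> (x::real) \<Longrightarrow> x \<le> 1 \<Longrightarrow> 0 \<le> - ln x"
  by (cases "x = 0") auto

lemma cp_cross:
  assumes cpZ: "cp MZ Z a" and cpT: "cp MT T b" and pi[measurable]: "\<pi> \<in> MZ \<rightarrow>\<^sub>M MT"
    and piZ: "\<And>\<omega>. \<omega> \<in> space M \<Longrightarrow> \<pi> (Z \<omega>) = T \<omega>"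
  shows "integrable (distr M MZ Z) (\<lambda>z. a z * - ln (b (\<pi> z)))"
    and "(\<integral>z. a z * - ln (b (\<pi> z)) \<partial>distr M MZ Z) = (\<integral>t. b t * - ln (b t) \<partial>distr M MT T)"
    and "integrable (distr M MZ Z) (\<lambda>z. (1 - a z) * - ln (1 - b (\<pi> z)))"
    and "(\<integral>z. (1 - a z) * - ln (1 - b (\<pi> z)) \<partial>distr M MZ Z) = (\<integral>t. (1 - b t) * - ln (1 - b t) \<partial>distr M MT T)"
proof -
  note [measurable] = cp_basic(1,2)[OF cpZ] cp_basic(1,2)[OF cpT]
  define PZ where "PZ = distr M MZ Z"
  define PT where "PT = distr M MT T"
  interpret PZ: prob_space PZ unfolding PZ_def by (rule prob_space_distr) simp
  interpret PT: prob_space PT unfolding PT_def by (rule prob_space_distr) simp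
  have sPZ[simp, measurable_cong]: "sets PZ = sets MZ" and [simp]: "space PZ = space MZ" unfolding PZ_def by auto
  have sPT[simp, measurable_cong]: "sets PT = sets MT" and [simp]: "space PT = space MT" unfolding PT_def by auto
  have pisp: "\<pi> z \<in> space MT" if "z \<in> space MZ" for z using measurable_space[OF pi that] .
  have a01: "0 \<le> a z" "a z \<le> 1" if "z \<in> space MZ" for z using cp_basic[OF cpZ] that by auto
  have b01: "0 \<le> b t" "b t \<le> 1" if "t \<in> space MT" for t using cp_basic[OF cpT] that by auto
  have T1int: "integrable PT (\<lambda>t. b t * - ln (b t))"
    by (rule PT.integrable_const_bound[where B=2]) (auto intro!: AE_I2 simp: b01 xlnx_01 abs_minus_commute)
  have T0int: "integrable PT (\<lambda>t. (1 - b t) * - ln (1 - b t))"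
    by (rule PT.integrable_const_bound[where B=2]) (auto intro!: AE_I2 simp: b01 xlnx_01 abs_minus_commute)
  have N1: "(\<integral>\<^sup>+z. ennreal (a z * - ln (b (\<pi> z))) \<partial>PZ) = ennreal (\<integral>t. b t * - ln (b t) \<partial>PT)"
  proof -
    have "(\<integral>\<^sup>+z. ennreal (a z * - ln (b (\<pi> z))) \<partial>PZ) = (\<integral>\<^sup>+z. ennreal (a z) * ennreal (- ln (b (\<pi> z))) \<partial>PZ)"
      by (intro nn_integral_cong ennreal_mult) (auto intro!: a01 neg_ln_nn ln_nonpos01 b01 pisp)
    also have "\<dots> = (\<integral>\<^sup>+t. ennreal (b t) * ennreal (- ln (b t)) \<partial>PT)"
      unfolding PZ_def PT_def by (rule cp_tower1[OF cpZ cpT pi piZ]) measurable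
    also have "\<dots> = (\<integral>\<^sup>+t. ennreal (b t * - ln (b t)) \<partial>PT)"
      by (intro nn_integral_cong ennreal_mult[symmetric]) (auto intro!: neg_ln_nn ln_nonpos01 b01)
    also have "\<dots> = ennreal (\<integral>t. b t * - ln (b t) \<partial>PT)"
      by (rule nn_integral_eq_integral[OF T1int]) (auto intro!: AE_I2 b01 neg_ln_nn ln_nonpos01 mult_nonneg_nonpos)
    finally show ?thesis .
  qed
  have N0: "(\<integral>\<^sup>+z. ennreal ((1 - a z) * - ln (1 - b (\<pi> z))) \<partial>PZ) = ennreal (\<integral>t. (1 - b t) * - ln (1 - b t) \<partial>PT)"
  proof -
    have "(\<integral>\<^sup>+z. ennreal ((1 - a z) * - ln (1 - b (\<pi> z))) \<partial>PZ) = (\<integral>\<^sup>+z. ennreal (1 - a z) * ennreal (- ln (1 - b (\<pi> z))) \<partial>PZ)"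
      by (intro nn_integral_cong ennreal_mult) (auto intro!: a01 neg_ln_nn ln_nonpos01 b01 pisp)
    also have "\<dots> = (\<integral>\<^sup>+t. ennreal (1 - b t) * ennreal (- ln (1 - b t)) \<partial>PT)"
      unfolding PZ_def PT_def by (rule cp_tower0[OF cpZ cpT pi piZ]) measurable
    also have "\<dots> = (\<integral>\<^sup>+t. ennreal ((1 - b t) * - ln (1 - b t)) \<partial>PT)"
      by (intro nn_integral_cong ennreal_mult[symmetric]) (auto intro!: neg_ln_nn ln_nonpos01 b01)
    also have "\<dots> = ennreal (\<integral>t. (1 - b t) * - ln (1 - b t) \<partial>PT)"
      by (rule nn_integral_eq_integral[OF T0int]) (auto intro!: AE_I2 b01 neg_ln_nn ln_nonpos01 mult_nonneg_nonpos)
    finally show ?thesis .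
  qed
  have nn1: "AE z in PZ. 0 \<le> a z * - ln (b (\<pi> z))"
    by (intro AE_I2) (auto intro!: mult_nonneg_nonneg mult_nonneg_nonpos neg_ln_nn ln_nonpos01 a01 b01 pisp)
  have nn0: "AE z in PZ. 0 \<le> (1 - a z) * - ln (1 - b (\<pi> z))"
    by (intro AE_I2) (auto intro!: mult_nonneg_nonneg mult_nonneg_nonpos neg_ln_nn ln_nonpos01 a01 b01 pisp)
  show "integrable (distr M MZ Z) (\<lambda>z. a z * - ln (b (\<pi> z)))"
    unfolding PZ_def[symmetric] by (rule integrableI_nn_integral_finite[OF _ nn1 N1]) simp
  show "integrable (distr M MZ Z) (\<lambda>z. (1 - a z) * - ln (1 - b (\<pi> z)))"
    unfolding PZ_def[symmetric] by (rule integrableI_nn_integral_finite[OF _ nn0 N0]) simp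
  have "(\<integral>z. a z * - ln (b (\<pi> z)) \<partial>PZ) = enn2real (\<integral>\<^sup>+z. ennreal (a z * - ln (b (\<pi> z))) \<partial>PZ)"
    by (rule integral_eq_nn_integral[OF _ nn1]) simp
  also have "\<dots> = (\<integral>t. b t * - ln (b t) \<partial>PT)"
    unfolding N1 by (rule enn2real_ennreal) (rule integral_nonneg_AE, auto intro!: AE_I2 b01 neg_ln_nn ln_nonpos01 mult_nonneg_nonpos)
  finally show "(\<integral>z. a z * - ln (b (\<pi> z)) \<partial>distr M MZ Z) = (\<integral>t. b t * - ln (b t) \<partial>distr M MT T)"
    unfolding PZ_def PT_def .
  have "(\<integral>z. (1 - a z) * - ln (1 - b (\<pi> z)) \<partial>PZ) = enn2real (\<integral>\<^sup>+z. ennreal ((1 - a z) * - ln (1 - b (\<pi> z))) \<partial>PZ)"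
    by (rule integral_eq_nn_integral[OF _ nn0]) simp
  also have "\<dots> = (\<integral>t. (1 - b t) * - ln (1 - b t) \<partial>PT)"
    unfolding N0 by (rule enn2real_ennreal) (rule integral_nonneg_AE, auto intro!: AE_I2 b01 neg_ln_nn ln_nonpos01 mult_nonneg_nonpos)
  finally show "(\<integral>z. (1 - a z) * - ln (1 - b (\<pi> z)) \<partial>distr M MZ Z) = (\<integral>t. (1 - b t) * - ln (1 - b t) \<partial>distr M MT T)"
    unfolding PZ_def PT_def .
qed

lemma phi_measurable[measurable (raw)]:
  assumes [measurable]: "f \<in> borel_measurable N" shows "(\<lambda>x. phi (f x)) \<in> borel_measurable N"
  unfolding phi_def by measurable

lemma min_bound: "0 \<le> (x::real) \<Longrightarrow> x \<le> 1 \<Longrightarrow> \<bar>min x (1 - x)\<bar> \<le> 1"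
  by (auto simp: min_def)

lemma phi_bound: "0 \<le> x \<Longrightarrow> x \<le> 1 \<Longrightarrow> \<bar>phi x\<bar> \<le> 4"
  unfolding phi_def using xlnx_01[of x] xlnx_01[of "1 - x"] by (smt (verit))

lemma cp_key:
  assumes cpZ: "cp MZ Z a" and cpT: "cp MT T b" and pi[measurable]: "\<pi> \<in> MZ \<rightarrow>\<^sub>M MT"
    and piZ: "\<And>\<omega>. \<omega> \<in> space M \<Longrightarrow> \<pi> (Z \<omega>) = T \<omega>"
  shows "(\<integral>t. min (b t) (1 - b t) \<partial>distr M MT T) - (\<integral>z. min (a z) (1 - a z) \<partial>distr M MZ Z)
       \<le> sqrt (1/2 * ((\<integral>z. phi (a z) \<partial>distr M MZ Z) - (\<integral>t. phi (b t) \<partial>distr M MT T)))"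
proof -
  note [measurable] = cp_basic(1,2)[OF cpZ] cp_basic(1,2)[OF cpT]
  note cross = cp_cross[OF cpZ cpT pi piZ]
  define PZ where "PZ = distr M MZ Z"
  define PT where "PT = distr M MT T"
  interpret PZ: prob_space PZ unfolding PZ_def by (rule prob_space_distr) simp
  interpret PT: prob_space PT unfolding PT_def by (rule prob_space_distr) simp
  have sPZ[simp, measurable_cong]: "sets PZ = sets MZ" and [simp]: "space PZ = space MZ" unfolding PZ_def by auto
  have sPT[simp, measurable_cong]: "sets PT = sets MT" and [simp]: "space PT = space MT" unfolding PT_def by auto
  have pisp: "\<pi> z \<in> space MT" if "z \<in> space MZ" for z using measurable_space[OF pi that] .
  have a01: "0 \<le> a z" "a z \<le> 1" if "z \<in> space MZ" for z using cp_basic[OF cpZ] that by auto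
  have b01: "0 \<le> b t" "b t \<le> 1" if "t \<in> space MT" for t using cp_basic[OF cpT] that by auto
  have PTeq: "PT = distr PZ MT \<pi>" unfolding PT_def PZ_def by (rule distr_pi[OF _ pi piZ]) simp
  define B where "B z = b (\<pi> z)" for z
  have Bm[measurable]: "B \<in> borel_measurable MZ" unfolding B_def by measurable
  have B01: "0 \<le> B z" "B z \<le> 1" if "z \<in> space MZ" for z unfolding B_def using b01 pisp that by auto
  have E1: "(\<integral>t. min (b t) (1 - b t) \<partial>PT) = (\<integral>z. min (B z) (1 - B z) \<partial>PZ)"
    unfolding PTeq B_def by (rule integral_distr) auto
  have T1int: "integrable PT (\<lambda>t. b t * - ln (b t))"
    by (rule PT.integrable_const_bound[where B=2]) (auto intro!: AE_I2 simp: b01 xlnx_01 abs_minus_commute)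
  have T0int: "integrable PT (\<lambda>t. (1 - b t) * - ln (1 - b t))"
    by (rule PT.integrable_const_bound[where B=2]) (auto intro!: AE_I2 simp: b01 xlnx_01 abs_minus_commute)
  have E2: "(\<integral>t. phi (b t) \<partial>PT) = - (\<integral>z. a z * - ln (B z) \<partial>PZ) - (\<integral>z. (1 - a z) * - ln (1 - B z) \<partial>PZ)"
  proof -
    have "(\<integral>t. phi (b t) \<partial>PT) = (\<integral>t. - (b t * - ln (b t)) - ((1 - b t) * - ln (1 - b t)) \<partial>PT)"
      unfolding phi_def by simp
    also have "\<dots> = - (\<integral>t. b t * - ln (b t) \<partial>PT) - (\<integral>t. (1 - b t) * - ln (1 - b t) \<partial>PT)"
      using T1int T0int by simp
    finally show ?thesis using cross(2,4) unfolding PZ_def PT_def B_def by simp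
  qed
  have AEz: "AE z in PZ. B z = 0 \<longrightarrow> a z = 0"
  proof -
    have "(\<integral>\<^sup>+z. ennreal (a z) * indicator {t\<in>space MT. b t = 0} (\<pi> z) \<partial>PZ)
        = (\<integral>\<^sup>+t. ennreal (b t) * indicator {t\<in>space MT. b t = 0} t \<partial>PT)"
      unfolding PZ_def PT_def by (rule cp_tower1[OF cpZ cpT pi piZ]) measurable
    also have "\<dots> = (\<integral>\<^sup>+t. 0 \<partial>PT)"
      by (intro nn_integral_cong) (auto simp: indicator_def)
    finally have z0: "(\<integral>\<^sup>+z. ennreal (a z) * indicator {t\<in>space MT. b t = 0} (\<pi> z) \<partial>PZ) = 0" by simp
    have mm: "(\<lambda>z. ennreal (a z) * indicator {t\<in>space MT. b t = 0} (\<pi> z)) \<in> borel_measurable PZ" by measurable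
    have "AE z in PZ. ennreal (a z) * indicator {t\<in>space MT. b t = 0} (\<pi> z) = 0"
      using nn_integral_0_iff_AE[OF mm] z0 by simp
    then show ?thesis using AE_space[of PZ]
      by eventually_elim (auto simp: B_def pisp indicator_def ennreal_eq_0_iff a01 dest: a01)
  qed
  have AEo: "AE z in PZ. B z = 1 \<longrightarrow> a z = 1"
  proof -
    have "(\<integral>\<^sup>+z. ennreal (1 - a z) * indicator {t\<in>space MT. b t = 1} (\<pi> z) \<partial>PZ)
        = (\<integral>\<^sup>+t. ennreal (1 - b t) * indicator {t\<in>space MT. b t = 1} t \<partial>PT)"
      unfolding PZ_def PT_def by (rule cp_tower0[OF cpZ cpT pi piZ]) measurable
    also have "\<dots> = (\<integral>\<^sup>+t. 0 \<partial>PT)"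
      by (intro nn_integral_cong) (auto simp: indicator_def)
    finally have z0: "(\<integral>\<^sup>+z. ennreal (1 - a z) * indicator {t\<in>space MT. b t = 1} (\<pi> z) \<partial>PZ) = 0" by simp
    have mm: "(\<lambda>z. ennreal (1 - a z) * indicator {t\<in>space MT. b t = 1} (\<pi> z)) \<in> borel_measurable PZ" by measurable
    have "AE z in PZ. ennreal (1 - a z) * indicator {t\<in>space MT. b t = 1} (\<pi> z) = 0"
      using nn_integral_0_iff_AE[OF mm] z0 by simp
    then show ?thesis using AE_space[of PZ]
      by eventually_elim (auto simp: B_def pisp indicator_def ennreal_eq_0_iff dest: a01)
  qed
  have pw: "AE z in PZ. 2 * (a z - B z)^2 \<le> phi (a z) + a z * - ln (B z) + (1 - a z) * - ln (1 - B z)"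
    using AEz AEo AE_space[of PZ]
  proof eventually_elim
    case (elim z)
    then have z: "z \<in> space MZ" by simp
    show ?case
    proof (cases "0 < B z \<and> B z < 1")
      case True
      then show ?thesis using pinsker_bin[of "a z" "B z"] a01[OF z] by simp
    next
      case False
      then have "B z = 0 \<or> B z = 1" using B01[OF z] by auto
      then show ?thesis using elim by (auto simp: phi_def)
    qed
  qed
  have iphi: "integrable PZ (\<lambda>z. phi (a z))"
    by (rule PZ.integrable_const_bound[where B=4]) (auto intro!: AE_I2 phi_bound a01)
  have ic1: "integrable PZ (\<lambda>z. a z * - ln (B z))" using cross(1) unfolding PZ_def B_def .
  have ic0: "integrable PZ (\<lambda>z. (1 - a z) * - ln (1 - B z))" using cross(3) unfolding PZ_def B_def .
  have d01: "\<bar>a z - B z\<bar> \<le> 1" if "z \<in> space MZ" for z using a01[OF that] B01[OF that] by auto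
  have isq: "integrable PZ (\<lambda>z. 2 * (a z - B z)^2)"
  proof (rule PZ.integrable_const_bound[where B=2])
    show "AE x in PZ. norm (2 * (a x - B x)^2) \<le> 2"
    proof (intro AE_I2)
      fix z assume "z \<in> space PZ"
      then have "\<bar>a z - B z\<bar> * \<bar>a z - B z\<bar> \<le> 1 * 1" using d01 by (intro mult_mono) auto
      then show "norm (2 * (a z - B z)^2) \<le> 2" by (simp add: power2_eq_square abs_mult)
    qed
  qed simp
  have "(\<integral>z. 2 * (a z - B z)^2 \<partial>PZ) \<le> (\<integral>z. phi (a z) + a z * - ln (B z) + (1 - a z) * - ln (1 - B z) \<partial>PZ)"
    by (rule integral_mono_AE[OF isq _ pw]) (intro Bochner_Integration.integrable_add iphi ic1 ic0)
  also have "\<dots> = (\<integral>z. phi (a z) \<partial>PZ) + (\<integral>z. a z * - ln (B z) \<partial>PZ) + (\<integral>z. (1 - a z) * - ln (1 - B z) \<partial>PZ)"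
    using iphi ic1 ic0 by simp
  also have "\<dots> = (\<integral>z. phi (a z) \<partial>PZ) - (\<integral>t. phi (b t) \<partial>PT)"
    unfolding E2 by simp
  finally have sq: "(\<integral>z. (a z - B z)^2 \<partial>PZ) \<le> 1/2 * ((\<integral>z. phi (a z) \<partial>PZ) - (\<integral>t. phi (b t) \<partial>PT))"
    by simp
  have imB: "integrable PZ (\<lambda>z. min (B z) (1 - B z))"
    by (rule PZ.integrable_const_bound[where B=1]) (auto intro!: AE_I2 min_bound B01)
  have ima: "integrable PZ (\<lambda>z. min (a z) (1 - a z))"
    by (rule PZ.integrable_const_bound[where B=1]) (auto intro!: AE_I2 min_bound a01)
  have iabs: "integrable PZ (\<lambda>z. \<bar>a z - B z\<bar>)"
    by (rule PZ.integrable_const_bound[where B=1]) (auto intro!: AE_I2 d01)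
  have "(\<integral>t. min (b t) (1 - b t) \<partial>PT) - (\<integral>z. min (a z) (1 - a z) \<partial>PZ)
      = (\<integral>z. min (B z) (1 - B z) - min (a z) (1 - a z) \<partial>PZ)"
    unfolding E1 using imB ima by simp
  also have "\<dots> \<le> (\<integral>z. \<bar>a z - B z\<bar> \<partial>PZ)"
    by (rule integral_mono[OF _ iabs]) (use imB ima in \<open>auto simp: min_def abs_if\<close>)
  also have "\<dots> \<le> sqrt (\<integral>z. (a z - B z)^2 \<partial>PZ)"
    by (rule PZ.abs_int_le_sqrt[where B=1]) (auto simp: d01)
  also have "\<dots> \<le> sqrt (1/2 * ((\<integral>z. phi (a z) \<partial>PZ) - (\<integral>t. phi (b t) \<partial>PT)))"
    using sq by (rule real_sqrt_le_mono)
  finally show ?thesis unfolding PZ_def PT_def .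
qed

lemma err_ge_min:
  assumes cp: "cp MZ Z a" and g[measurable]: "g \<in> MZ \<rightarrow>\<^sub>M (count_space UNIV :: bool measure)"
  shows "(\<integral>z. min (a z) (1 - a z) \<partial>distr M MZ Z) \<le> measure M {\<omega> \<in> space M. g (Z \<omega>) \<noteq> Y \<omega>}"
proof -
  note [measurable] = cp_basic(1,2)[OF cp]
  interpret PZ: prob_space "distr M MZ Z" by (rule prob_space_distr) simp
  have a01: "0 \<le> a z" "a z \<le> 1" if "z \<in> space MZ" for z using cp_basic[OF cp] that by auto
  show ?thesis unfolding cp_err[OF cp g]
  proof (rule integral_mono)
    show "integrable (distr M MZ Z) (\<lambda>z. min (a z) (1 - a z))"
      by (rule PZ.integrable_const_bound[where B=1]) (auto intro!: AE_I2 min_bound a01)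
    show "integrable (distr M MZ Z) (\<lambda>z. if g z then 1 - a z else a z)"
    proof (rule PZ.integrable_const_bound[where B=1])
      show "AE x in distr M MZ Z. norm (if g x then 1 - a x else a x) \<le> 1"
      proof (rule AE_I2)
        fix x assume "x \<in> space (distr M MZ Z)"
        then have "0 \<le> a x" "a x \<le> 1" using a01 by auto
        then show "norm (if g x then 1 - a x else a x) \<le> 1" by auto
      qed
    qed simp
  qed auto
qed

lemma bayes_risk_bdd: "bdd_below ((\<lambda>g. measure M {\<omega> \<in> space M. g (X \<omega>) \<noteq> Y \<omega>}) ` (MX \<rightarrow>\<^sub>M (count_space UNIV :: bool measure)))"
  by (rule bdd_belowI[of _ 0]) auto

end



theorem mainTheorem4:
  fixes M :: "'a measure" and MT :: "'t measure" and MH :: "'h measure"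
    and Y :: "'a \<Rightarrow> bool" and T :: "'a \<Rightarrow> 't" and H :: "'a \<Rightarrow> 'h"
  assumes "prob_space M"
    and "Y \<in> M \<rightarrow>\<^sub>M (count_space UNIV :: bool measure)"
    and "T \<in> M \<rightarrow>\<^sub>M MT"
    and "H \<in> M \<rightarrow>\<^sub>M MH"
  shows "0 \<le> bayes_risk M MT T Y - bayes_risk M (MT \<Otimes>\<^sub>M MH) (\<lambda>\<omega>. (T \<omega>, H \<omega>)) Y
    \<and> bayes_risk M MT T Y - bayes_risk M (MT \<Otimes>\<^sub>M MH) (\<lambda>\<omega>. (T \<omega>, H \<omega>)) Y
        \<le> sqrt (1/2 * prob_space.conditional_mutual_information M (exp 1)
                 (count_space UNIV :: bool measure) MH MT Y H T)"
proof -
  interpret bsetup M Y using assms(1,2) by (simp add: bsetup_def bsetup_axioms_def)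
  have Tm[measurable]: "T \<in> M \<rightarrow>\<^sub>M MT" and Hm[measurable]: "H \<in> M \<rightarrow>\<^sub>M MH" using assms by auto
  define Z where "Z \<omega> = (H \<omega>, T \<omega>)" for \<omega>
  have Zm[measurable]: "Z \<in> M \<rightarrow>\<^sub>M MH \<Otimes>\<^sub>M MT" unfolding Z_def by measurable
  obtain a where cpZ: "cp (MH \<Otimes>\<^sub>M MT) Z a" using cp_exists[OF Zm] by blast
  obtain b where cpT: "cp MT T b" using cp_exists[OF Tm] by blast
  note [measurable] = cp_basic(1,2)[OF cpZ] cp_basic(1,2)[OF cpT]
  have b01: "0 \<le> b t" "b t \<le> 1" if "t \<in> space MT" for t using cp_basic[OF cpT] that by auto
  have key: "(\<integral>t. min (b t) (1 - b t) \<partial>distr M MT T) - (\<integral>z. min (a z) (1 - a z) \<partial>distr M (MH \<Otimes>\<^sub>M MT) Z)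
       \<le> sqrt (1/2 * ((\<integral>z. phi (a z) \<partial>distr M (MH \<Otimes>\<^sub>M MT) Z) - (\<integral>t. phi (b t) \<partial>distr M MT T)))"
    by (rule cp_key[OF cpZ cpT measurable_snd]) (simp add: Z_def)
  have CMI: "conditional_mutual_information (exp 1) (count_space UNIV :: bool measure) MH MT Y H T
      = (\<integral>z. phi (a z) \<partial>distr M (MH \<Otimes>\<^sub>M MT) Z) - (\<integral>t. phi (b t) \<partial>distr M MT T)"
    unfolding conditional_mutual_information_def Z_def[symmetric] cp_MI[OF cpZ] cp_MI[OF cpT] by simp
  define RT where "RT = bayes_risk M MT T Y"
  define RZ where "RZ = bayes_risk M (MT \<Otimes>\<^sub>M MH) (\<lambda>\<omega>. (T \<omega>, H \<omega>)) Y"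
  have "(\<lambda>_. True) \<in> MT \<rightarrow>\<^sub>M (count_space UNIV :: bool measure)" by simp
  then have ne1: "(MT \<rightarrow>\<^sub>M (count_space UNIV :: bool measure)) \<noteq> {}" by blast
  have "(\<lambda>_. True) \<in> MT \<Otimes>\<^sub>M MH \<rightarrow>\<^sub>M (count_space UNIV :: bool measure)" by simp
  then have ne2: "(MT \<Otimes>\<^sub>M MH \<rightarrow>\<^sub>M (count_space UNIV :: bool measure)) \<noteq> {}" by blast
  have RZ_le: "RZ \<le> RT"
    unfolding RT_def bayes_risk_def
  proof (rule cINF_greatest[OF ne1])
    fix g assume g[measurable]: "g \<in> MT \<rightarrow>\<^sub>M (count_space UNIV :: bool measure)"
    have g': "(\<lambda>x. g (fst x)) \<in> MT \<Otimes>\<^sub>M MH \<rightarrow>\<^sub>M (count_space UNIV :: bool measure)" by measurable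
    have "RZ \<le> measure M {\<omega> \<in> space M. (\<lambda>x. g (fst x)) (T \<omega>, H \<omega>) \<noteq> Y \<omega>}"
      unfolding RZ_def bayes_risk_def by (rule cINF_lower[OF bayes_risk_bdd g'])
    then show "RZ \<le> measure M {\<omega> \<in> space M. g (T \<omega>) \<noteq> Y \<omega>}" by simp
  qed
  have RT_le: "RT \<le> (\<integral>t. min (b t) (1 - b t) \<partial>distr M MT T)"
  proof -
    have gT: "(\<lambda>t. 1/2 < b t) \<in> MT \<rightarrow>\<^sub>M (count_space UNIV :: bool measure)" by measurable
    have "RT \<le> measure M {\<omega> \<in> space M. (\<lambda>t. 1/2 < b t) (T \<omega>) \<noteq> Y \<omega>}"
      unfolding RT_def bayes_risk_def by (rule cINF_lower[OF bayes_risk_bdd gT])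
    also have "\<dots> = (\<integral>t. (if 1/2 < b t then 1 - b t else b t) \<partial>distr M MT T)"
      by (rule cp_err[OF cpT gT])
    also have "\<dots> = (\<integral>t. min (b t) (1 - b t) \<partial>distr M MT T)"
      by (intro Bochner_Integration.integral_cong) (auto simp: min_def)
    finally show ?thesis .
  qed
  have RZ_ge: "(\<integral>z. min (a z) (1 - a z) \<partial>distr M (MH \<Otimes>\<^sub>M MT) Z) \<le> RZ"
    unfolding RZ_def bayes_risk_def
  proof (rule cINF_greatest[OF ne2])
    fix g assume g[measurable]: "g \<in> MT \<Otimes>\<^sub>M MH \<rightarrow>\<^sub>M (count_space UNIV :: bool measure)"
    have g': "(\<lambda>z. g (snd z, fst z)) \<in> MH \<Otimes>\<^sub>M MT \<rightarrow>\<^sub>M (count_space UNIV :: bool measure)" by measurable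
    have "(\<integral>z. min (a z) (1 - a z) \<partial>distr M (MH \<Otimes>\<^sub>M MT) Z) \<le> measure M {\<omega> \<in> space M. (\<lambda>z. g (snd z, fst z)) (Z \<omega>) \<noteq> Y \<omega>}"
      by (rule err_ge_min[OF cpZ g'])
    then show "(\<integral>z. min (a z) (1 - a z) \<partial>distr M (MH \<Otimes>\<^sub>M MT) Z) \<le> measure M {\<omega> \<in> space M. g (T \<omega>, H \<omega>) \<noteq> Y \<omega>}"
      by (simp add: Z_def)
  qed
  have "RT - RZ \<le> sqrt (1/2 * conditional_mutual_information (exp 1) (count_space UNIV :: bool measure) MH MT Y H T)"
    using key RT_le RZ_ge unfolding CMI by linarith
  then show ?thesis using RZ_le unfolding RT_def RZ_def by (intro conjI) linarith+
qed

end
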